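(* Let $\mathcal D=\{d_1,\dots,d_s\}$ and $\mathcal H=\{h_1,\dots,h_n\}$ be finite sets, where each hypothesis $h_i$ is a probability distribution $\mathbb P[\cdot\mid h_i]$ on $\mathcal D$, the hypotheses are pairwise distinct as distributions, and the prior $\bm p=(p_1,\dots,p_n)$ on $\mathcal H$ has all $p_i>0$. Consider chained iterated learning with initial hypothesis $\bm h_{\mathrm{init}}=h_1$. Then there is a constant $C>0$ independent of $t,\delta,\varepsilon$ such that for any $0<\delta,\varepsilon<1$, the sample size sequence $$m_t=\frac{8sn^2}{\delta^2}\Bigl(\ln\frac{t}{\varepsilon}+C\Bigr)$$ makes iterated learning $(\delta,\varepsilon)$-self-sustaining: for every $t\ge1$, a random hypothesis $h$ drawn from the posterior $\bm h^t$ of learner $t$ satisfies $d_{TV}(\mathbb P[\cdot\mid h],\mathbb P[\cdot\mid h_1])\le\delta$ with probability at least $1-\varepsilon$.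
   Context: $d_{TV}$ is the total variation distance (half the $\ell_1$-norm of the difference) between distributions on $\mathcal D$. Chained iterated learning: for $\mathbf d=(x_1,\dots,x_m)\in\mathcal D^m$ let $\mathbb P[\mathbf d\mid h]=\prod_{k=1}^m\mathbb P[x_k\mid h]$ and Bayesian posterior $\mathbb P[h_j\mid\mathbf d]=\mathbb P[\mathbf d\mid h_j]p_j/\sum_{k=1}^n\mathbb P[\mathbf d\mid h_k]p_k$. Learner $t\ge1$ picks a hypothesis $h_i$ from the posterior of learner $t-1$ (for $t=1$, from $\bm h_{\mathrm{init}}$), draws $m_t$ i.i.d. samples $\mathbf d\in\mathcal D^{m_t}$ from $h_i$, and forms the posterior $\mathbb P[\cdot\mid\mathbf d]$. The transition probabilities are $P^{|t}_{ij}=\sum_{\mathbf d\in\mathcal D^{m_t}}\mathbb P[h_j\mid\mathbf d]\,\mathbb P[\mathbf d\mid h_i]$, and the (marginal) posterior of learner $t$ is the row vector $\bm h^t=\bm h^{t-1}P^{|t}$ with $\bm h^0=(1,0,\dots,0)$. *)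

theory Defs
  imports Complex_Main
begin

text \<open>Data points are indexed by {..<s} (d_1..d_s), hypotheses by {..<n} (h_1..h_n);
  index 0 is h_1. L i x is the likelihood P[d_x | h_i], p j the prior of h_j.\<close>

definition lik :: "(nat \<Rightarrow> nat \<Rightarrow> real) \<Rightarrow> nat \<Rightarrow> nat list \<Rightarrow> real" where
  "lik L i ds = (\<Prod>x\<leftarrow>ds. L i x)"

definition posterior :: "nat \<Rightarrow> (nat \<Rightarrow> nat \<Rightarrow> real) \<Rightarrow> (nat \<Rightarrow> real) \<Rightarrow> nat list \<Rightarrow> nat \<Rightarrow> real" where
  "posterior n L p ds j = lik L j ds * p j / (\<Sum>k<n. lik L k ds * p k)"

definition samples :: "nat \<Rightarrow> nat \<Rightarrow> nat list set" where
  "samples s m = {ds. set ds \<subseteq> {..<s} \<and> length ds = m}"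

definition trans_prob :: "nat \<Rightarrow> nat \<Rightarrow> (nat \<Rightarrow> nat \<Rightarrow> real) \<Rightarrow> (nat \<Rightarrow> real) \<Rightarrow> nat \<Rightarrow> nat \<Rightarrow> nat \<Rightarrow> real" where
  "trans_prob n s L p m i j = (\<Sum>ds\<in>samples s m. posterior n L p ds j * lik L i ds)"

text \<open>Marginal posterior h^t of learner t, with sample sizes ms t for learner t; h^0 = (1,0,...,0).\<close>
fun hpost :: "nat \<Rightarrow> nat \<Rightarrow> (nat \<Rightarrow> nat \<Rightarrow> real) \<Rightarrow> (nat \<Rightarrow> real) \<Rightarrow> (nat \<Rightarrow> nat) \<Rightarrow> nat \<Rightarrow> nat \<Rightarrow> real" where
  "hpost n s L p ms 0 j = (if j = 0 then 1 else 0)"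
| "hpost n s L p ms (Suc t) j =
     (\<Sum>i<n. hpost n s L p ms t i * trans_prob n s L p (ms (Suc t)) i j)"

definition dTV :: "nat \<Rightarrow> (nat \<Rightarrow> nat \<Rightarrow> real) \<Rightarrow> nat \<Rightarrow> nat \<Rightarrow> real" where
  "dTV s L i k = (1/2) * (\<Sum>x<s. \<bar>L i x - L k x\<bar>)"

end

theory Submission
  imports Defs
begin



lemma sum_sq_card:
  fixes w :: "'a \<Rightarrow> real"
  assumes "finite A"
  shows "(\<Sum>x\<in>A. w x)^2 \<le> real (card A) * (\<Sum>x\<in>A. (w x)^2)"
proof -
  have "0 \<le> (\<Sum>x\<in>A. \<Sum>y\<in>A. (w x - w y)^2)" by (intro sum_nonneg) auto
  also have "\<dots> = (\<Sum>x\<in>A. \<Sum>y\<in>A. (w x)^2 + (w y)^2 - 2 * w x * w y)"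
    by (simp add: power2_diff)
  also have "\<dots> = 2 * real (card A) * (\<Sum>x\<in>A. (w x)^2) - 2 * (\<Sum>x\<in>A. w x)^2"
    by (simp add: sum.distrib sum_subtractf sum_distrib_left[symmetric] sum_distrib_right[symmetric] power2_eq_square
        sum.swap[of _ A A] mult.assoc sum.distrib[symmetric])
  finally show ?thesis by simp
qed

lemma samples_Suc:
  "samples s (Suc m) = (\<lambda>(x,ds). x # ds) ` ({..<s} \<times> samples s m)"
  unfolding samples_def
  by (auto simp: image_iff length_Suc_conv)

lemma finite_samples: "finite (samples s m)"
proof (induction m)
  case 0 then show ?case by (simp add: samples_def)
next
  case (Suc m) then show ?case by (simp add: samples_Suc)
qed

lemma sum_samples_prod:
  fixes f :: "nat \<Rightarrow> real"
  shows "(\<Sum>ds\<in>samples s m. (\<Prod>x\<leftarrow>ds. f x)) = (\<Sum>x<s. f x)^m"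
proof (induction m)
  case 0
  have "samples s 0 = {[]}" by (auto simp: samples_def)
  then show ?case by simp
next
  case (Suc m)
  have inj: "inj_on (\<lambda>(x,ds). x # ds) ({..<s} \<times> samples s m)"
    by (auto simp: inj_on_def)
  have "(\<Sum>ds\<in>samples s (Suc m). (\<Prod>x\<leftarrow>ds. f x))
      = (\<Sum>(x,ds)\<in>{..<s} \<times> samples s m. f x * (\<Prod>y\<leftarrow>ds. f y))"
    unfolding samples_Suc by (subst sum.reindex[OF inj]) (auto simp: case_prod_beta intro!: sum.cong)
  also have "\<dots> = (\<Sum>x<s. f x * (\<Sum>ds\<in>samples s m. (\<Prod>y\<leftarrow>ds. f y)))"
    by (simp add: sum.cartesian_product[symmetric] sum_distrib_left)
  also have "\<dots> = (\<Sum>x<s. f x)^Suc m" using Suc by (simp add: sum_distrib_right[symmetric])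
  finally show ?case .
qed




locale ilsetup =
  fixes n s :: nat and L :: "nat \<Rightarrow> nat \<Rightarrow> real" and p :: "nat \<Rightarrow> real"
  assumes n1: "n \<ge> 1"
    and Lnn: "\<forall>i<n. \<forall>x<s. L i x \<ge> 0"
    and Lsum: "\<forall>i<n. (\<Sum>x<s. L i x) = 1"
    and ppos: "\<forall>i<n. p i > 0"
    and psum: "(\<Sum>i<n. p i) = 1"
begin

lemma p_nonneg: "i < n \<Longrightarrow> p i \<ge> 0" using ppos by (simp add: less_imp_le)

lemma lik_nonneg: "i < n \<Longrightarrow> set ds \<subseteq> {..<s} \<Longrightarrow> lik L i ds \<ge> 0"
  unfolding lik_def by (induction ds) (use Lnn in auto)

lemma lik_nonneg': "i < n \<Longrightarrow> ds \<in> samples s m \<Longrightarrow> lik L i ds \<ge> 0"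
  using lik_nonneg by (auto simp: samples_def)

lemma denom_nonneg: "ds \<in> samples s m \<Longrightarrow> (\<Sum>k<n. lik L k ds * p k) \<ge> 0"
  using lik_nonneg' ppos by (intro sum_nonneg) (auto intro!: mult_nonneg_nonneg p_nonneg)

lemma posterior_nonneg: "j < n \<Longrightarrow> ds \<in> samples s m \<Longrightarrow> posterior n L p ds j \<ge> 0"
  unfolding posterior_def using lik_nonneg'[of j ds m] ppos denom_nonneg[of ds m]
  by (auto intro!: divide_nonneg_nonneg mult_nonneg_nonneg p_nonneg)

lemma trans_nonneg: "i < n \<Longrightarrow> j < n \<Longrightarrow> trans_prob n s L p m i j \<ge> 0"
  unfolding trans_prob_def using posterior_nonneg lik_nonneg'
  by (auto intro!: sum_nonneg mult_nonneg_nonneg)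

lemma sum_lik: "i < n \<Longrightarrow> (\<Sum>ds\<in>samples s m. lik L i ds) = 1"
  unfolding lik_def using sum_samples_prod[where s=s and m=m and f="L i"] Lsum by simp

lemma post_sum:
  assumes "ds \<in> samples s m" "i < n"
  shows "lik L i ds * (\<Sum>j<n. posterior n L p ds j) = lik L i ds"
proof (cases "(\<Sum>k<n. lik L k ds * p k) = 0")
  case True
  have "\<forall>k\<in>{..<n}. lik L k ds * p k = 0"
    using True lik_nonneg'[OF _ assms(1)] ppos
    by (subst sum_nonneg_eq_0_iff[symmetric]) (auto intro!: mult_nonneg_nonneg p_nonneg)
  then have "lik L i ds = 0" using assms(2) ppos by fastforce
  then show ?thesis by simp
next
  case False
  have "(\<Sum>j<n. posterior n L p ds j) = 1"
    unfolding posterior_def using False by (simp add: sum_divide_distrib[symmetric])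
  then show ?thesis by simp
qed

lemma row_sum: "i < n \<Longrightarrow> (\<Sum>j<n. trans_prob n s L p m i j) = 1"
proof -
  assume i: "i < n"
  have "(\<Sum>j<n. trans_prob n s L p m i j) = (\<Sum>ds\<in>samples s m. lik L i ds * (\<Sum>j<n. posterior n L p ds j))"
    unfolding trans_prob_def by (subst sum.swap) (simp add: sum_distrib_left mult.commute)
  also have "\<dots> = (\<Sum>ds\<in>samples s m. lik L i ds)"
    using post_sum i by (intro sum.cong) auto
  also have "\<dots> = 1" using sum_lik i by simp
  finally show ?thesis .
qed

lemma hpost_nonneg: "j < n \<Longrightarrow> hpost n s L p ms t j \<ge> 0"
proof (induction t arbitrary: j)
  case 0 then show ?case by simp
next
  case (Suc t) then show ?case by (auto intro!: sum_nonneg mult_nonneg_nonneg trans_nonneg)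
qed

lemma hpost_sum: "(\<Sum>j<n. hpost n s L p ms t j) = 1"
proof (induction t)
  case 0 then show ?case using n1 by (simp add: sum.delta)
next
  case (Suc t)
  have "(\<Sum>j<n. hpost n s L p ms (Suc t) j)
     = (\<Sum>i<n. hpost n s L p ms t i * (\<Sum>j<n. trans_prob n s L p (ms (Suc t)) i j))"
    by (simp add: sum_distrib_left) (subst sum.swap, simp)
  also have "\<dots> = (\<Sum>i<n. hpost n s L p ms t i)" using row_sum by simp
  finally show ?case using Suc by simp
qed

end



definition BC :: "nat \<Rightarrow> (nat \<Rightarrow> nat \<Rightarrow> real) \<Rightarrow> nat \<Rightarrow> nat \<Rightarrow> real" where
  "BC s L i j = (\<Sum>x<s. sqrt (L i x * L j x))"

lemma sqrt_prod_list:
  "sqrt (lik L i ds * lik L j ds) = (\<Prod>x\<leftarrow>ds. sqrt (L i x * L j x))"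
  unfolding lik_def by (induction ds) (auto simp: real_sqrt_mult)

lemma core_ineq:
  fixes a b D li pi pj lj :: real
  assumes "a = lj * pj" "b = li * pi" "li \<ge> 0" "lj \<ge> 0" "pi > 0" "pj > 0" "D \<ge> a + b"
  shows "a / D * li \<le> sqrt (pj / pi) * sqrt (li * lj)"
proof -
  have a0: "a \<ge> 0" "b \<ge> 0" using assms by auto
  have r: "sqrt (pj / pi) * sqrt (li * lj) = sqrt (a * b) / pi"
    using assms by (simp add: real_sqrt_mult real_sqrt_divide field_simps)
  show ?thesis
  proof (cases "a + b = 0")
    case True then have "a = 0" using a0 by auto
    then show ?thesis using assms by auto
  next
    case False
    then have Dp: "D > 0" using a0 assms(7) by linarith
    have l: "a / D * li = a * b / (pi * D)" using assms by (simp add: field_simps)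
    have sq: "sqrt (a*b) \<le> a + b"
    proof -
      have "a * b \<le> (a+b)^2" using a0 by (simp add: power2_eq_square algebra_simps)
      then have "sqrt (a*b) \<le> sqrt ((a+b)^2)" by (rule real_sqrt_le_mono)
      then show ?thesis using a0 by simp
    qed
    have "a * b = sqrt (a*b) * sqrt (a*b)" using a0 by simp
    also have "\<dots> \<le> sqrt (a*b) * D" using sq assms(7) a0 by (intro mult_left_mono) auto
    finally have "a * b / D \<le> sqrt (a*b)" using Dp by (simp add: divide_le_eq)
    then have "a * b / (pi * D) \<le> sqrt (a*b) / pi" using assms(5)
      by (simp add: divide_right_mono field_simps)
    then show ?thesis using l r by simp
  qed
qed

context ilsetup begin

lemma trans_bound:
  assumes i: "i < n" and j: "j < n" and ij: "i \<noteq> j"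
  shows "trans_prob n s L p m i j \<le> sqrt (p j / p i) * BC s L i j ^ m"
proof -
  have "trans_prob n s L p m i j \<le> (\<Sum>ds\<in>samples s m. sqrt (p j / p i) * (\<Prod>x\<leftarrow>ds. sqrt (L i x * L j x)))"
    unfolding trans_prob_def
  proof (intro sum_mono)
    fix ds assume ds: "ds \<in> samples s m"
    have D: "(\<Sum>k<n. lik L k ds * p k) \<ge> lik L j ds * p j + lik L i ds * p i"
    proof -
      have "(\<Sum>k\<in>{i,j}. lik L k ds * p k) \<le> (\<Sum>k<n. lik L k ds * p k)"
        using i j lik_nonneg'[OF _ ds] p_nonneg by (intro sum_mono2) auto
      then show ?thesis using ij by simp
    qed
    have "posterior n L p ds j * lik L i ds \<le> sqrt (p j / p i) * sqrt (lik L i ds * lik L j ds)"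
      unfolding posterior_def
      by (rule core_ineq[OF refl refl lik_nonneg'[OF i ds] lik_nonneg'[OF j ds]])
         (use ppos i j D in auto)
    then show "posterior n L p ds j * lik L i ds \<le> sqrt (p j / p i) * (\<Prod>x\<leftarrow>ds. sqrt (L i x * L j x))"
      by (simp add: sqrt_prod_list)
  qed
  also have "\<dots> = sqrt (p j / p i) * BC s L i j ^ m"
    by (simp add: sum_distrib_left[symmetric] sum_samples_prod BC_def)
  finally show ?thesis .
qed

lemma L_le1: "i < n \<Longrightarrow> x < s \<Longrightarrow> L i x \<le> 1"
  using member_le_sum[of x "{..<s}" "L i"] Lnn Lsum by auto

lemma BC_nonneg: "i < n \<Longrightarrow> j < n \<Longrightarrow> BC s L i j \<ge> 0"
  unfolding BC_def using Lnn by (intro sum_nonneg) auto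

lemma BC_bound:
  assumes i: "i < n" and j: "j < n" and s1: "s \<ge> 1"
  shows "BC s L i j \<le> 1 - (dTV s L i j)^2 / (2 * real s)"
proof -
  define u where "u x = sqrt (L i x)" for x
  define v where "v x = sqrt (L j x)" for x
  have uv: "x < s \<Longrightarrow> u x \<ge> 0 \<and> v x \<ge> 0 \<and> u x \<le> 1 \<and> v x \<le> 1 \<and> (u x)^2 = L i x \<and> (v x)^2 = L j x
     \<and> sqrt (L i x * L j x) = u x * v x" for x
    using Lnn i j L_le1[OF i] L_le1[OF j] by (auto simp: u_def v_def real_sqrt_mult)
  have e1: "(\<Sum>x<s. (u x - v x)^2) = 2 - 2 * BC s L i j"
  proof -
    have "(\<Sum>x<s. (u x - v x)^2) = (\<Sum>x<s. L i x + L j x - 2 * sqrt (L i x * L j x))"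
      using uv by (intro sum.cong) (auto simp: power2_diff)
    also have "\<dots> = 2 - 2 * BC s L i j"
      using Lsum i j by (simp add: sum.distrib sum_subtractf BC_def sum_distrib_left)
    finally show ?thesis .
  qed
  have "dTV s L i j \<le> (\<Sum>x<s. \<bar>u x - v x\<bar>)"
  proof -
    have "(\<Sum>x<s. \<bar>L i x - L j x\<bar>) \<le> (\<Sum>x<s. 2 * \<bar>u x - v x\<bar>)"
    proof (intro sum_mono)
      fix x assume "x \<in> {..<s}"
      then have h: "u x \<ge> 0 \<and> v x \<ge> 0 \<and> u x \<le> 1 \<and> v x \<le> 1 \<and> (u x)^2 = L i x \<and> (v x)^2 = L j x"
        using uv by auto
      have "\<bar>L i x - L j x\<bar> = \<bar>u x - v x\<bar> * (u x + v x)"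
        using h by (metis abs_mult abs_of_nonneg add_nonneg_nonneg power2_eq_square square_diff_square_factored mult.commute)
      also have "\<dots> \<le> \<bar>u x - v x\<bar> * 2" using h by (intro mult_left_mono) auto
      finally show "\<bar>L i x - L j x\<bar> \<le> 2 * \<bar>u x - v x\<bar>" by simp
    qed
    then show ?thesis unfolding dTV_def by (simp add: sum_distrib_left[symmetric])
  qed
  moreover have "dTV s L i j \<ge> 0" unfolding dTV_def by (auto intro: sum_nonneg)
  ultimately have "(dTV s L i j)^2 \<le> (\<Sum>x<s. \<bar>u x - v x\<bar>)^2" by (intro power_mono) auto
  also have "\<dots> \<le> real s * (\<Sum>x<s. \<bar>u x - v x\<bar>^2)"
    using sum_sq_card[of "{..<s}" "\<lambda>x. \<bar>u x - v x\<bar>"] by simp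
  also have "\<dots> = real s * (2 - 2 * BC s L i j)" using e1 by simp
  finally have "(dTV s L i j)^2 \<le> real s * (2 - 2 * BC s L i j)" .
  then show ?thesis using s1 by (simp add: field_simps)
qed

lemma BC_pow_bound:
  assumes i: "i < n" and j: "j < n" and s1: "s \<ge> 1"
  shows "BC s L i j ^ m \<le> exp (- (real m * (dTV s L i j)^2 / (2 * real s)))"
proof -
  have "BC s L i j \<le> exp (- ((dTV s L i j)^2 / (2 * real s)))"
    using BC_bound[OF i j s1] exp_ge_add_one_self[of "- ((dTV s L i j)^2 / (2 * real s))"] by linarith
  then have "BC s L i j ^ m \<le> exp (- ((dTV s L i j)^2 / (2 * real s))) ^ m"
    using BC_nonneg[OF i j] by (intro power_mono) auto
  also have "\<dots> = exp (- (real m * (dTV s L i j)^2 / (2 * real s)))"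
    by (subst exp_of_nat_mult[symmetric]) simp
  finally show ?thesis .
qed

end



definition stepR :: "nat \<Rightarrow> nat \<Rightarrow> (nat \<Rightarrow> nat \<Rightarrow> real) \<Rightarrow> real \<Rightarrow> nat set \<Rightarrow> nat set" where
  "stepR n s L r A = A \<union> {j. j < n \<and> (\<exists>i\<in>A. dTV s L i j \<le> r)}"

definition Rset :: "nat \<Rightarrow> nat \<Rightarrow> (nat \<Rightarrow> nat \<Rightarrow> real) \<Rightarrow> real \<Rightarrow> nat \<Rightarrow> nat set" where
  "Rset n s L r k = (stepR n s L r ^^ k) {0}"

lemma Rset_Suc: "Rset n s L r (Suc k) = stepR n s L r (Rset n s L r k)"
  by (simp add: Rset_def)

lemma dTV_sym: "dTV s L i j = dTV s L j i"
  unfolding dTV_def by (simp add: abs_minus_commute)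

lemma dTV_tri: "dTV s L j k \<le> dTV s L j i + dTV s L i k"
proof -
  have "(\<Sum>x<s. \<bar>L j x - L k x\<bar>) \<le> (\<Sum>x<s. \<bar>L j x - L i x\<bar> + \<bar>L i x - L k x\<bar>)"
    by (intro sum_mono) auto
  then show ?thesis unfolding dTV_def by (simp add: sum.distrib)
qed

lemma Rset_sub: "n \<ge> 1 \<Longrightarrow> Rset n s L r k \<subseteq> {..<n}"
  by (induction k) (auto simp: Rset_def stepR_def)

lemma Rset_zero: "0 \<in> Rset n s L r k"
  by (induction k) (auto simp: Rset_def stepR_def)

lemma Rset_dist: "r \<ge> 0 \<Longrightarrow> j \<in> Rset n s L r k \<Longrightarrow> dTV s L j 0 \<le> real k * r"
proof (induction k arbitrary: j)
  case 0 then show ?case by (simp add: Rset_def dTV_def)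
next
  case (Suc k)
  show ?case
  proof (cases "j \<in> Rset n s L r k")
    case True
    have "dTV s L j 0 \<le> real k * r" using Suc.IH[OF Suc.prems(1) True] .
    also have "\<dots> \<le> real (Suc k) * r" using Suc.prems(1) by (simp add: mult_right_mono)
    finally show ?thesis .
  next
    case False
    then obtain i where i: "i \<in> Rset n s L r k" "dTV s L i j \<le> r"
      using Suc.prems by (auto simp: Rset_Suc stepR_def)
    have "dTV s L j 0 \<le> dTV s L j i + dTV s L i 0" by (rule dTV_tri)
    also have "\<dots> \<le> r + real k * r" using i Suc.IH[OF Suc.prems(1) i(1)] dTV_sym[of s L i j] by linarith
    finally show ?thesis by (simp add: algebra_simps)
  qed
qed

lemma Rset_mono: "Rset n s L r k \<subseteq> Rset n s L r (Suc k)"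
  by (auto simp: Rset_Suc stepR_def)

lemma Rset_stable:
  assumes eq: "Rset n s L r (Suc k) = Rset n s L r k"
  shows "Rset n s L r (k + l) = Rset n s L r k"
proof (induction l)
  case 0 then show ?case by simp
next
  case (Suc l)
  have "Rset n s L r (k + Suc l) = stepR n s L r (Rset n s L r (k + l))"
    by (simp only: add_Suc_right Rset_Suc)
  also have "\<dots> = stepR n s L r (Rset n s L r k)" using Suc by simp
  also have "\<dots> = Rset n s L r (Suc k)" by (simp only: Rset_Suc)
  finally show ?case using eq by (rule trans)
qed

lemma Rset_card:
  assumes "n \<ge> 1"
  shows "(\<forall>k<K. Rset n s L r (Suc k) \<noteq> Rset n s L r k) \<Longrightarrow> card (Rset n s L r K) \<ge> K + 1"
proof (induction K)
  case 0 then show ?case by (simp add: Rset_def)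
next
  case (Suc K)
  have fin: "finite (Rset n s L r (Suc K))" by (rule finite_subset[OF Rset_sub[OF assms(1)]]) simp
  have ne: "Rset n s L r (Suc K) \<noteq> Rset n s L r K" using Suc.prems by simp
  have sub: "Rset n s L r K \<subseteq> Rset n s L r (Suc K)" by (rule Rset_mono)
  have "Rset n s L r K \<subset> Rset n s L r (Suc K)" using sub ne by (simp add: psubset_eq)
  then have "card (Rset n s L r K) < card (Rset n s L r (Suc K))" using fin by (simp add: psubset_card_mono)
  moreover have "\<forall>k<K. Rset n s L r (Suc k) \<noteq> Rset n s L r k" using Suc.prems by auto
  then have "card (Rset n s L r K) \<ge> K + 1" by (rule Suc.IH)
  ultimately show ?case by simp
qed

lemma Rset_closed: assumes "n \<ge> 1" shows "Rset n s L r (Suc n) = Rset n s L r n"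
proof (rule ccontr)
  assume ne: "Rset n s L r (Suc n) \<noteq> Rset n s L r n"
  have "\<forall>k<Suc n. Rset n s L r (Suc k) \<noteq> Rset n s L r k"
  proof (intro allI impI)
    fix k assume k: "k < Suc n"
    show "Rset n s L r (Suc k) \<noteq> Rset n s L r k"
    proof
      assume eq: "Rset n s L r (Suc k) = Rset n s L r k"
      have "Rset n s L r (k + (Suc n - k)) = Rset n s L r k" by (rule Rset_stable[OF eq])
      moreover have "Rset n s L r (k + (n - k)) = Rset n s L r k" by (rule Rset_stable[OF eq])
      ultimately show False using ne k by (simp add: Suc_diff_le)
    qed
  qed
  then have "card (Rset n s L r (Suc n)) \<ge> Suc n + 1" by (rule Rset_card[OF assms])
  moreover have "card (Rset n s L r (Suc n)) \<le> n"
    using card_mono[OF _ Rset_sub[OF assms]] by simp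
  ultimately show False by simp
qed

context ilsetup begin

lemma out_bound:
  assumes R: "R \<subseteq> {..<n}" "0 \<in> R"
    and eta: "\<And>k i. i \<in> R \<Longrightarrow> (\<Sum>j\<in>{..<n}-R. trans_prob n s L p (ms k) i j) \<le> \<eta> k"
    and eta0: "\<And>k. \<eta> k \<ge> 0"
  shows "(\<Sum>j\<in>{..<n}-R. hpost n s L p ms t j) \<le> (\<Sum>k\<in>{1..t}. \<eta> k)"
proof (induction t)
  case 0 then show ?case using R by (auto intro!: sum.neutral)
next
  case (Suc t)
  define Ou where "Ou = {..<n} - R"
  define h where "h i = hpost n s L p ms t i" for i
  define P where "P i j = trans_prob n s L p (ms (Suc t)) i j" for i j
  have fO: "finite Ou" "finite R" using finite_subset[OF R(1)] by (auto simp: Ou_def)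
  have rowO: "i < n \<Longrightarrow> (\<Sum>j\<in>Ou. P i j) \<le> 1" for i
  proof -
    assume i: "i < n"
    have "(\<Sum>j\<in>Ou. P i j) \<le> (\<Sum>j<n. P i j)"
      using trans_nonneg[OF i] by (intro sum_mono2) (auto simp: Ou_def P_def)
    then show ?thesis using row_sum[OF i] by (simp add: P_def)
  qed
  have hR: "(\<Sum>i\<in>R. h i) \<le> 1"
  proof -
    have "(\<Sum>i\<in>R. h i) \<le> (\<Sum>i<n. h i)"
      using hpost_nonneg R by (intro sum_mono2) (auto simp: h_def)
    then show ?thesis using hpost_sum by (simp add: h_def)
  qed
  have split: "{..<n} = R \<union> Ou" "R \<inter> Ou = {}" using R by (auto simp: Ou_def)
  have "(\<Sum>j\<in>Ou. hpost n s L p ms (Suc t) j) = (\<Sum>i<n. h i * (\<Sum>j\<in>Ou. P i j))"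
    by (simp add: h_def P_def sum_distrib_left) (subst sum.swap, simp)
  also have "\<dots> = (\<Sum>i\<in>R. h i * (\<Sum>j\<in>Ou. P i j)) + (\<Sum>i\<in>Ou. h i * (\<Sum>j\<in>Ou. P i j))"
    using split fO by (simp add: sum.union_disjoint)
  also have "\<dots> \<le> (\<Sum>i\<in>R. h i * \<eta> (Suc t)) + (\<Sum>i\<in>Ou. h i * 1)"
  proof (intro add_mono sum_mono mult_left_mono)
    fix i assume "i \<in> R" then show "(\<Sum>j\<in>Ou. P i j) \<le> \<eta> (Suc t)" using eta by (simp add: Ou_def P_def)
  next
    fix i assume "i \<in> R" then show "0 \<le> h i" using R hpost_nonneg by (auto simp: h_def)
  next
    fix i assume "i \<in> Ou" then show "(\<Sum>j\<in>Ou. P i j) \<le> 1" using rowO by (auto simp: Ou_def)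
  next
    fix i assume "i \<in> Ou" then show "0 \<le> h i" using hpost_nonneg by (auto simp: h_def Ou_def)
  qed
  also have "\<dots> \<le> \<eta> (Suc t) + (\<Sum>i\<in>Ou. h i)"
  proof -
    have "(\<Sum>i\<in>R. h i) * \<eta> (Suc t) \<le> 1 * \<eta> (Suc t)" using hR eta0[of "Suc t"] by (rule mult_right_mono)
    then show ?thesis by (simp add: sum_distrib_right[symmetric])
  qed
  also have "\<dots> \<le> \<eta> (Suc t) + (\<Sum>k\<in>{1..t}. \<eta> k)" using Suc by (simp add: Ou_def h_def)
  also have "\<dots> = (\<Sum>k\<in>{1..Suc t}. \<eta> k)" by simp
  finally show ?case by (simp add: Ou_def)
qed

end



lemma sum_inv_sq: "(\<Sum>k\<in>{1..t}. 1 / (real k)^2) \<le> 2 - 2 / (real t + 1)"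
proof (induction t)
  case 0 then show ?case by simp
next
  case (Suc t)
  define x where "x = real t + 1"
  have x1: "x \<ge> 1" by (simp add: x_def)
  have "1 / x^2 = 2 / (2 * x^2)" by simp
  also have "\<dots> \<le> 2 / (x * (x + 1))"
    by (rule divide_left_mono) (use x1 in \<open>auto simp: power2_eq_square intro: mult_pos_pos\<close>)
  also have "\<dots> = 2 / x - 2 / (x + 1)" using x1 by (simp add: field_simps)
  finally have "1 / (real (Suc t))^2 \<le> 2 / (real t + 1) - 2 / (real (Suc t) + 1)"
    by (simp add: x_def add.commute)
  then show ?case using Suc by simp
qed

lemma exp_bound:
  fixes k :: nat and \<epsilon> C :: real
  assumes k: "k \<ge> 1" and e: "0 < \<epsilon>" "\<epsilon> < 1" and C: "C > 0" and y: "y \<ge> 4 * (ln (real k / \<epsilon>) + C)"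
  shows "exp (- y) \<le> \<epsilon> * exp (- C) / (real k)^2"
proof -
  have kp: "real k > 0" using k by linarith
  have lk: "ln (real k) \<ge> 0" using k by (intro ln_ge_zero) linarith
  have le: "ln \<epsilon> < 0" using e by (intro ln_less_zero)
  have lke: "ln (real k / \<epsilon>) = ln (real k) - ln \<epsilon>" using kp e(1) by (rule ln_divide_pos)
  have y'': "y \<ge> 4 * ln (real k) - 4 * ln \<epsilon> + 4 * C" 
  proof -
    have "4 * (ln (real k / \<epsilon>) + C) = 4 * ln (real k) - 4 * ln \<epsilon> + 4 * C"
      unfolding lke by (simp add: algebra_simps)
    then show ?thesis using y by linarith
  qed
  have "-y \<le> ln \<epsilon> - C - 2 * ln (real k)" using y'' lk le C by linarith
  then have "exp (-y) \<le> exp (ln \<epsilon> - C - 2 * ln (real k))" by (rule exp_mono)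
  also have "exp (ln \<epsilon> - C - 2 * ln (real k)) = \<epsilon> / exp C / (real k)^2"
  proof -
    have "exp (2 * ln (real k)) = exp (ln (real k)) * exp (ln (real k))"
      by (metis exp_add mult_2)
    also have "\<dots> = (real k)^2" using kp by (simp only: exp_ln power2_eq_square)
    finally have "exp (2 * ln (real k)) = (real k)^2" .
    then show ?thesis using e by (simp only: exp_diff exp_ln)
  qed
  also have "\<epsilon> / exp C / (real k)^2 = \<epsilon> * exp (- C) / (real k)^2" by (simp add: exp_minus divide_inverse)
  finally show ?thesis .
qed




theorem theorem2:
  fixes n s :: nat and L :: "nat \<Rightarrow> nat \<Rightarrow> real" and p :: "nat \<Rightarrow> real"
  assumes "n \<ge> 1" and "s \<ge> 1"
    and "\<forall>i<n. \<forall>x<s. L i x \<ge> 0"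
    and "\<forall>i<n. (\<Sum>x<s. L i x) = 1"
    and "\<forall>i<n. \<forall>k<n. i \<noteq> k \<longrightarrow> (\<exists>x<s. L i x \<noteq> L k x)"
    and "\<forall>i<n. p i > 0"
    and "(\<Sum>i<n. p i) = 1"
  shows "\<exists>C>0. \<forall>\<delta> \<epsilon>::real. 0 < \<delta> \<and> \<delta> < 1 \<and> 0 < \<epsilon> \<and> \<epsilon> < 1 \<longrightarrow>
    (let ms = (\<lambda>t. nat \<lceil>8 * real s * real n ^ 2 / \<delta> ^ 2 * (ln (real t / \<epsilon>) + C)\<rceil>)
     in \<forall>t\<ge>1. (\<Sum>j\<in>{j. j < n \<and> dTV s L j 0 \<le> \<delta>}. hpost n s L p ms t j) \<ge> 1 - \<epsilon>)"
proof -
  interpret ilsetup n s L p using assms by unfold_locales auto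
  have n1: "n \<ge> 1" and s1: "s \<ge> 1" using assms by auto
  define P0 where "P0 = Min (p ` {..<n})"
  have "P0 \<in> p ` {..<n}" unfolding P0_def using n1 by (intro Min_in) (auto simp: lessThan_empty_iff)
  then have P0pos: "P0 > 0" using ppos by auto
  have P0le: "i < n \<Longrightarrow> P0 \<le> p i" for i unfolding P0_def by (intro Min_le) auto
  have ple1: "i < n \<Longrightarrow> p i \<le> 1" for i
    using member_le_sum[of i "{..<n}" p] p_nonneg psum by auto
  define K where "K = 1 / P0"
  have K1: "K \<ge> 1" using P0le[of 0] ple1[of 0] n1 P0pos by (simp add: K_def)
  define C where "C = ln (2 * real n * K) + 1"
  have nK: "2 * real n * K \<ge> 1"
  proof -
    have "2 * real n \<ge> 1" using n1 by simp
    then have "(2 * real n) * K \<ge> 1 * 1" using K1 by (intro mult_mono) auto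
    then show ?thesis by simp
  qed
  have Cpos: "C > 0" unfolding C_def using nK by (simp add: ln_ge_zero add_nonneg_pos)
  have sqK: "x \<ge> 0 \<Longrightarrow> x \<le> K \<Longrightarrow> sqrt x \<le> K" for x
  proof -
    assume x: "x \<ge> 0" "x \<le> K"
    have "sqrt x \<le> sqrt K" using x by simp
    also have "sqrt K \<le> sqrt K * sqrt K" using K1 by (intro mult_le_cancel_left1[THEN iffD2]) auto
    also have "\<dots> = K" using K1 by simp
    finally show ?thesis .
  qed
  show ?thesis
  proof (intro exI[of _ C] conjI allI impI)
    show "C > 0" by (rule Cpos)
    fix \<delta> \<epsilon> :: real
    assume de: "0 < \<delta> \<and> \<delta> < 1 \<and> 0 < \<epsilon> \<and> \<epsilon> < 1"
    define A where "A = 8 * real s * real n ^ 2 / \<delta> ^ 2"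
    define ms where "ms = (\<lambda>t. nat \<lceil>8 * real s * real n ^ 2 / \<delta> ^ 2 * (ln (real t / \<epsilon>) + C)\<rceil>)"
    define r where "r = \<delta> / real n"
    define R where "R = Rset n s L r n"
    define Ou where "Ou = {..<n} - R"
    have r0: "r \<ge> 0" using de n1 by (simp add: r_def)
    have Rsub: "R \<subseteq> {..<n}" unfolding R_def using Rset_sub[OF n1] .
    have R0: "0 \<in> R" unfolding R_def by (rule Rset_zero)
    have Rclosed: "r < dTV s L i j" if "i \<in> R" "j < n" "j \<notin> R" for i j
    proof (rule ccontr)
      assume "\<not> r < dTV s L i j"
      then have "dTV s L i j \<le> r" by simp
      then have "j \<in> stepR n s L r R" using that unfolding stepR_def by blast
      also have "stepR n s L r R = R" unfolding R_def using Rset_closed[OF n1] by (simp add: Rset_Suc)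
      finally show False using that by simp
    qed
    have RG: "dTV s L j 0 \<le> \<delta>" if "j \<in> R" for j
    proof -
      have "dTV s L j 0 \<le> real n * r" using Rset_dist[OF r0] that unfolding R_def by blast
      also have "\<dots> = \<delta>" using n1 by (simp add: r_def)
      finally show ?thesis .
    qed
    define \<eta> where "\<eta> k = real n * K * exp (- (real (ms k) * r^2 / (2 * real s)))" for k
    have eta0: "\<eta> k \<ge> 0" for k using K1 by (simp add: \<eta>_def)
    have eta: "(\<Sum>j\<in>{..<n}-R. trans_prob n s L p (ms k) i j) \<le> \<eta> k" if i: "i \<in> R" for k i
    proof -
      define E where "E = exp (- (real (ms k) * r^2 / (2 * real s)))"
      have iN: "i < n" using i Rsub by auto
      have "(\<Sum>j\<in>{..<n}-R. trans_prob n s L p (ms k) i j) \<le> (\<Sum>j\<in>{..<n}-R. K * E)"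
      proof (intro sum_mono)
        fix j assume j: "j \<in> {..<n} - R"
        then have jN: "j < n" and ij: "i \<noteq> j" and jR: "j \<notin> R" using i by auto
        have d: "r < dTV s L i j" using Rclosed[OF i jN jR] .
        have "trans_prob n s L p (ms k) i j \<le> sqrt (p j / p i) * BC s L i j ^ (ms k)"
          by (rule trans_bound[OF iN jN ij])
        also have "\<dots> \<le> K * E"
        proof (rule mult_mono)
          show "sqrt (p j / p i) \<le> K"
          proof (rule sqK)
            show "0 \<le> p j / p i" using p_nonneg[OF jN] p_nonneg[OF iN] by simp
            have "p j / p i \<le> 1 / p i" using ple1[OF jN] p_nonneg[OF iN] by (rule divide_right_mono)
            also have "\<dots> \<le> 1 / P0" using P0le[OF iN] P0pos by (simp add: frac_le)
            finally show "p j / p i \<le> K" by (simp add: K_def)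
          qed
          have "BC s L i j ^ (ms k) \<le> exp (- (real (ms k) * (dTV s L i j)^2 / (2 * real s)))"
            by (rule BC_pow_bound[OF iN jN s1])
          also have "\<dots> \<le> E"
          proof -
            have "r^2 \<le> (dTV s L i j)^2" using d r0 by (intro power_mono) auto
            then have "real (ms k) * r^2 \<le> real (ms k) * (dTV s L i j)^2" by (intro mult_left_mono) auto
            then have "real (ms k) * r^2 / (2 * real s) \<le> real (ms k) * (dTV s L i j)^2 / (2 * real s)"
              by (intro divide_right_mono) auto
            then show ?thesis unfolding E_def by simp
          qed
          finally show "BC s L i j ^ (ms k) \<le> E" .
          show "0 \<le> K" using K1 by simp
          show "0 \<le> BC s L i j ^ (ms k)" using BC_nonneg[OF iN jN] by simp
        qed
        finally show "trans_prob n s L p (ms k) i j \<le> K * E" .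
      qed
      also have "\<dots> = real (card ({..<n}-R)) * (K * E)" by simp
      also have "\<dots> \<le> real n * (K * E)"
      proof (intro mult_right_mono)
        have "card ({..<n}-R) \<le> card {..<n::nat}" by (intro card_mono) auto
        then show "real (card ({..<n}-R)) \<le> real n" by simp
        show "0 \<le> K * E" using K1 by (simp add: E_def)
      qed
      finally show ?thesis by (simp add: \<eta>_def E_def mult.assoc)
    qed
    have outb: "(\<Sum>j\<in>{..<n}-R. hpost n s L p ms t j) \<le> (\<Sum>k\<in>{1..t}. \<eta> k)" for t
      by (rule out_bound[OF Rsub R0 eta eta0])
    have etak: "\<eta> k \<le> real n * K * (\<epsilon> * exp (- C) / (real k)^2)" if k: "k \<ge> 1" for k
    proof -
      have lnpos: "ln (real k / \<epsilon>) \<ge> 0" using k de by (intro ln_ge_zero) (simp add: field_simps)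
      have "real (ms k) \<ge> A * (ln (real k / \<epsilon>) + C)"
        unfolding ms_def A_def by (rule real_nat_ceiling_ge)
      then have "real (ms k) * (r^2 / (2 * real s)) \<ge> A * (ln (real k / \<epsilon>) + C) * (r^2 / (2 * real s))"
        by (intro mult_right_mono) auto
      moreover have "A * (r^2 / (2 * real s)) = 4"
        using n1 s1 de by (simp add: A_def r_def field_simps)
      ultimately have "real (ms k) * (r^2 / (2 * real s)) \<ge> 4 * (ln (real k / \<epsilon>) + C)"
        by (metis mult.commute mult.left_commute)
      then have y: "real (ms k) * r^2 / (2 * real s) \<ge> 4 * (ln (real k / \<epsilon>) + C)"
        by simp
      have "exp (- (real (ms k) * r^2 / (2 * real s))) \<le> \<epsilon> * exp (- C) / (real k)^2"
        using exp_bound[OF k _ _ Cpos y] de by auto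
      then show ?thesis unfolding \<eta>_def using K1 by (intro mult_left_mono) auto
    qed
    have sumeta: "(\<Sum>k\<in>{1..t}. \<eta> k) \<le> \<epsilon>" for t
    proof -
      have "(\<Sum>k\<in>{1..t}. \<eta> k) \<le> (\<Sum>k\<in>{1..t}. real n * K * \<epsilon> * exp (- C) * (1 / (real k)^2))"
        using etak by (intro sum_mono) (auto simp: field_simps)
      also have "\<dots> = real n * K * \<epsilon> * exp (- C) * (\<Sum>k\<in>{1..t}. 1 / (real k)^2)"
        by (simp add: sum_distrib_left)
      also have "\<dots> \<le> real n * K * \<epsilon> * exp (- C) * 2"
      proof (intro mult_left_mono)
        show "(\<Sum>k\<in>{1..t}. 1 / (real k)^2) \<le> 2" 
        proof -
          have "2 / (real t + 1) \<ge> 0" by simp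
          then show ?thesis using sum_inv_sq[of t] by linarith
        qed
        show "0 \<le> real n * K * \<epsilon> * exp (- C)" using K1 de by simp
      qed
      also have "\<dots> = \<epsilon> * ((2 * real n * K) * exp (- C))" by (simp add: algebra_simps)
      also have "(2 * real n * K) * exp (- C) = exp (-1)"
      proof -
        have pos: "2 * real n * K > 0" using nK by linarith
        have "exp (- C) = 1 / (exp (ln (2 * real n * K)) * exp 1)"
          unfolding C_def by (simp only: exp_minus exp_add inverse_eq_divide)
        also have "\<dots> = 1 / ((2 * real n * K) * exp 1)" by (simp only: exp_ln[OF pos])
        finally have "(2 * real n * K) * exp (- C) = (2 * real n * K) / ((2 * real n * K) * exp 1)" by simp
        also have "\<dots> = 1 / exp 1"
        proof -
          have h: "\<And>x::real. x > 0 \<Longrightarrow> x / (x * exp 1) = 1 / exp 1" by simp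
          show ?thesis by (rule h[OF pos])
        qed
        also have "\<dots> = exp (-1)" by (simp add: exp_minus inverse_eq_divide)
        finally show ?thesis .
      qed
      also have "\<epsilon> * exp (-1) \<le> \<epsilon> * 1" using de by (intro mult_left_mono) auto
      finally show ?thesis by simp
    qed
    show "let ms = (\<lambda>t. nat \<lceil>8 * real s * real n ^ 2 / \<delta> ^ 2 * (ln (real t / \<epsilon>) + C)\<rceil>)
     in \<forall>t\<ge>1. (\<Sum>j\<in>{j. j < n \<and> dTV s L j 0 \<le> \<delta>}. hpost n s L p ms t j) \<ge> 1 - \<epsilon>"
      unfolding Let_def ms_def[symmetric]
    proof (intro allI impI)
      fix t :: nat
      have "1 = (\<Sum>j<n. hpost n s L p ms t j)" using hpost_sum by simp
      also have "\<dots> = (\<Sum>j\<in>{..<n}-R. hpost n s L p ms t j) + (\<Sum>j\<in>R. hpost n s L p ms t j)"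
        using Rsub by (simp add: sum.subset_diff)
      finally have eq: "(\<Sum>j\<in>R. hpost n s L p ms t j) = 1 - (\<Sum>j\<in>{..<n}-R. hpost n s L p ms t j)" by simp
      have "(\<Sum>j\<in>R. hpost n s L p ms t j) \<le> (\<Sum>j\<in>{j. j < n \<and> dTV s L j 0 \<le> \<delta>}. hpost n s L p ms t j)"
        using RG Rsub hpost_nonneg by (intro sum_mono2) auto
      moreover have "(\<Sum>j\<in>{..<n}-R. hpost n s L p ms t j) \<le> \<epsilon>" using outb[of t] sumeta[of t] by simp
      ultimately show "(\<Sum>j\<in>{j. j < n \<and> dTV s L j 0 \<le> \<delta>}. hpost n s L p ms t j) \<ge> 1 - \<epsilon>"
        using eq by simp
    qed
  qed
qed


end
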